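(* Let $\Omega\subset\mathbb{R}^n$ be a domain, $x,y\in\Omega$, and $\gamma\subset\Omega$ a rectifiable curve joining $x$ to $y$. Suppose that for some $\alpha\in(0,1)$ and $C\ge1$, $$\int_\gamma\operatorname{dist}(z,\partial\Omega)^{\alpha-1}ds(z)\le C\,\operatorname{length}(\gamma)^\alpha.$$ Then (i) there exists $\bar z\in\gamma$ with $\operatorname{length}(\gamma)\le C^{\frac1{1-\alpha}}\operatorname{dist}(\bar z,\partial\Omega)$; and (ii) $$\frac1{\operatorname{length}(\gamma)}\int_\gamma\operatorname{dist}(z,\partial\Omega)^{\alpha-1}ds(z)\le 2C\inf_{z\in\gamma}\operatorname{dist}(z,\partial\Omega)^{\alpha-1}.$$
   Context: $ds$ denotes arc length measure; distances are Euclidean. *)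

theory Defs
  imports "HOL-Analysis.Analysis"
begin

definition variation :: "(real \<Rightarrow> 'a::metric_space) \<Rightarrow> real \<Rightarrow> real \<Rightarrow> real" where
  "variation g a b =
     Sup {(\<Sum>i<m. dist (g (t (Suc i))) (g (t i))) | t m.
            t 0 = a \<and> t m = b \<and> (\<forall>i<m. t i \<le> t (Suc i))}"

definition rectifiable :: "(real \<Rightarrow> 'a::metric_space) \<Rightarrow> bool" where
  "rectifiable g \<longleftrightarrow>
     bdd_above {(\<Sum>i<m. dist (g (t (Suc i))) (g (t i))) | t m.
            t 0 = 0 \<and> t m = 1 \<and> (\<forall>i<m. t i \<le> t (Suc i))}"

definition curve_length :: "(real \<Rightarrow> 'a::metric_space) \<Rightarrow> real" where
  "curve_length g = variation g 0 1"

definition arclen_fun :: "(real \<Rightarrow> 'a::metric_space) \<Rightarrow> real \<Rightarrow> real" where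
  "arclen_fun g t = variation g 0 (max 0 (min 1 t))"

text \<open>Line integral with respect to arc length: \<integral>_g f ds is the Lebesgue--Stieltjes
  integral of f \<circ> g on [0,1] with respect to the arc-length function.\<close>
definition arclength_integral :: "(real \<Rightarrow> 'a::metric_space) \<Rightarrow> ('a \<Rightarrow> real) \<Rightarrow> real" where
  "arclength_integral g f = (LINT t:{0..1}|interval_measure (arclen_fun g). f (g t))"

end

theory Submission imports Defs begin

definition psums :: "(real \<Rightarrow> 'a::metric_space) \<Rightarrow> real \<Rightarrow> real \<Rightarrow> real set" where
  "psums g a b = {(\<Sum>i<m. dist (g (t (Suc i))) (g (t i))) | t m.
            t 0 = a \<and> t m = b \<and> (\<forall>i<m. t i \<le> t (Suc i))}"

lemma variation_psums: "variation g a b = Sup (psums g a b)"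
  by (simp add: variation_def psums_def)

lemma rectifiable_psums: "rectifiable g \<longleftrightarrow> bdd_above (psums g 0 1)"
  by (simp add: rectifiable_def psums_def)

lemma part_mono:
  assumes "\<forall>i<m. (t::nat\<Rightarrow>real) i \<le> t (Suc i)" "i \<le> j" "j \<le> m"
  shows "t i \<le> t j"
  using assms(2,3)
proof (induction j)
  case 0 then show ?case by simp
next
  case (Suc j)
  show ?case
  proof (cases "i = Suc j")
    case False
    then have "t i \<le> t j" using Suc by simp
    also have "\<dots> \<le> t (Suc j)" using assms(1) Suc.prems by simp
    finally show ?thesis .
  qed simp
qed

lemma psums_nonneg: "s \<in> psums g a b \<Longrightarrow> 0 \<le> s"
  by (auto simp: psums_def intro!: sum_nonneg)

lemma psums_single: "a \<le> b \<Longrightarrow> dist (g b) (g a) \<in> psums g a b"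
  unfolding psums_def
  by (rule CollectI, rule exI[of _ "\<lambda>i. if i = 0 then a else b"], rule exI[of _ 1]) simp

lemma sum_lessThan_add_split:
  "(\<Sum>i<m+n. f i) = (\<Sum>i<m. f i) + (\<Sum>i<n. f (m+i :: nat) :: real)"
  by (induction n) (simp_all add: add.assoc)

lemma psums_concat:
  assumes "s1 \<in> psums g a b" "s2 \<in> psums g b c"
  shows "s1 + s2 \<in> psums g a c"
proof -
  obtain t1 m1 where P1: "s1 = (\<Sum>i<m1. dist (g (t1 (Suc i))) (g (t1 i)))" "t1 0 = a" "t1 m1 = b"
      "\<forall>i<m1. t1 i \<le> t1 (Suc i)" using assms(1) unfolding psums_def by blast
  obtain t2 m2 where P2: "s2 = (\<Sum>i<m2. dist (g (t2 (Suc i))) (g (t2 i)))" "t2 0 = b" "t2 m2 = c"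
      "\<forall>i<m2. t2 i \<le> t2 (Suc i)" using assms(2) unfolding psums_def by blast
  define t where "t i = (if i \<le> m1 then t1 i else t2 (i - m1))" for i
  have "(\<Sum>i<m1+m2. dist (g (t (Suc i))) (g (t i)))
      = (\<Sum>i<m1. dist (g (t (Suc i))) (g (t i))) + (\<Sum>i<m2. dist (g (t (Suc (m1+i)))) (g (t (m1+i))))"
    by (rule sum_lessThan_add_split)
  also have "(\<Sum>i<m1. dist (g (t (Suc i))) (g (t i))) = s1"
    unfolding P1 by (rule sum.cong) (auto simp: t_def)
  also have "(\<Sum>i<m2. dist (g (t (Suc (m1+i)))) (g (t (m1+i)))) = s2"
    unfolding P2 by (rule sum.cong) (auto simp: t_def P1 P2 Suc_diff_le)
  finally have s: "(\<Sum>i<m1+m2. dist (g (t (Suc i))) (g (t i))) = s1 + s2" .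
  have "t 0 = a" by (simp add: t_def P1)
  moreover have "t (m1+m2) = c" using P1 P2 by (auto simp: t_def)
  moreover have "\<forall>i<m1+m2. t i \<le> t (Suc i)"
  proof (intro allI impI)
    fix i assume i: "i < m1 + m2"
    consider "i < m1" | "i = m1" | "i > m1" by linarith
    then show "t i \<le> t (Suc i)"
    proof cases
      case 1 then show ?thesis using \<open>\<forall>i<m1. t1 i \<le> t1 (Suc i)\<close> by (simp add: t_def)
    next
      case 3 then show ?thesis using P2(4) i by (auto simp: t_def Suc_diff_le)
    next
      case 2 then show ?thesis using P2(4) i P1 P2 by (auto simp: t_def)
    qed
  qed
  ultimately show ?thesis unfolding psums_def using s by (intro CollectI exI[of _ t] exI[of _ "m1+m2"]) auto
qed

lemma dist_clamp:
  fixes u v b :: real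
  assumes "u \<le> v"
  shows "dist (g v) (g u) \<le> dist (g (min v b)) (g (min u b)) + dist (g (max v b)) (g (max u b))"
proof -
  consider "v \<le> b" | "b \<le> u" | "u \<le> b" "b \<le> v" by linarith
  then show ?thesis
  proof cases
    case 1 then show ?thesis using assms by (simp add: max_def min_def)
  next
    case 2 then show ?thesis using assms by (simp add: max_def min_def)
  next
    case 3 then show ?thesis using assms dist_triangle[of "g v" "g u" "g b"]
      by (simp add: max_def min_def dist_commute)
  qed
qed

lemma psums_split:
  assumes "s \<in> psums g a c" "a \<le> b" "b \<le> c"
  shows "\<exists>s1\<in>psums g a b. \<exists>s2\<in>psums g b c. s \<le> s1 + s2"
proof -
  obtain t m where P: "s = (\<Sum>i<m. dist (g (t (Suc i))) (g (t i)))" "t 0 = a" "t m = c"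
      "\<forall>i<m. t i \<le> t (Suc i)" using assms(1) unfolding psums_def by blast
  define s1 where "s1 = (\<Sum>i<m. dist (g (min (t (Suc i)) b)) (g (min (t i) b)))"
  define s2 where "s2 = (\<Sum>i<m. dist (g (max (t (Suc i)) b)) (g (max (t i) b)))"
  have "s1 \<in> psums g a b" unfolding psums_def s1_def
    by (intro CollectI exI[of _ "\<lambda>i. min (t i) b"] exI[of _ m]) (use P assms in auto)
  moreover have "s2 \<in> psums g b c" unfolding psums_def s2_def
    by (intro CollectI exI[of _ "\<lambda>i. max (t i) b"] exI[of _ m]) (use P assms in auto)
  moreover have "s \<le> s1 + s2" unfolding P s1_def s2_def sum.distrib[symmetric]
    by (rule sum_mono) (use P(4) in \<open>auto intro: dist_clamp\<close>)
  ultimately show ?thesis by blast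
qed

lemma psums_ne: "a \<le> b \<Longrightarrow> psums g a b \<noteq> {}"
  using psums_single by blast

lemma psums_bdd:
  assumes "bdd_above (psums g 0 1)" "0 \<le> a" "a \<le> b" "b \<le> 1"
  shows "bdd_above (psums g a b)"
proof -
  obtain B where B: "\<And>x. x \<in> psums g 0 1 \<Longrightarrow> x \<le> B" using assms(1) by (auto simp: bdd_above_def)
  show ?thesis unfolding bdd_above_def
  proof (intro exI ballI)
    fix s assume s: "s \<in> psums g a b"
    have 0: "dist (g a) (g 0) \<in> psums g 0 a" "dist (g 1) (g b) \<in> psums g b 1"
      using assms by (auto intro: psums_single)
    have "dist (g a) (g 0) + s + dist (g 1) (g b) \<in> psums g 0 1"
      using psums_concat[OF psums_concat[OF 0(1) s] 0(2)] .
    from B[OF this] show "s \<le> B" by (smt (verit) zero_le_dist)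
  qed
qed

lemma var_add:
  assumes "bdd_above (psums g 0 1)" "0 \<le> a" "a \<le> b" "b \<le> c" "c \<le> 1"
  shows "variation g a c = variation g a b + variation g b c"
proof -
  have bab: "bdd_above (psums g a b)" and bbc: "bdd_above (psums g b c)"
    and bac: "bdd_above (psums g a c)" using psums_bdd[OF assms(1)] assms by auto
  have "variation g a c \<le> variation g a b + variation g b c"
    unfolding variation_psums
  proof (rule cSup_least)
    show "psums g a c \<noteq> {}" using assms by (intro psums_ne) simp
    fix s assume "s \<in> psums g a c"
    then obtain s1 s2 where "s1 \<in> psums g a b" "s2 \<in> psums g b c" "s \<le> s1 + s2"
      using psums_split assms by blast
    then show "s \<le> Sup (psums g a b) + Sup (psums g b c)"
      using cSup_upper[OF _ bab] cSup_upper[OF _ bbc] by (smt (verit))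
  qed
  moreover have "variation g a b + variation g b c \<le> variation g a c"
  proof -
    have "\<And>s2. s2 \<in> psums g b c \<Longrightarrow> Sup (psums g a b) \<le> Sup (psums g a c) - s2"
    proof -
      fix s2 assume s2: "s2 \<in> psums g b c"
      show "Sup (psums g a b) \<le> Sup (psums g a c) - s2"
      proof (rule cSup_least)
        show "psums g a b \<noteq> {}" using assms by (intro psums_ne) simp
        fix s1 assume "s1 \<in> psums g a b"
        then have "s1 + s2 \<in> psums g a c" using s2 by (rule psums_concat)
        then show "s1 \<le> Sup (psums g a c) - s2" using cSup_upper[OF _ bac] by smt
      qed
    qed
    then have "Sup (psums g b c) \<le> Sup (psums g a c) - Sup (psums g a b)"
      using assms by (intro cSup_least psums_ne) (auto simp: algebra_simps)
    then show ?thesis unfolding variation_psums by simp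
  qed
  ultimately show ?thesis by simp
qed

lemma var_ge_dist:
  assumes "bdd_above (psums g 0 1)" "0 \<le> a" "a \<le> b" "b \<le> 1"
  shows "dist (g b) (g a) \<le> variation g a b"
  unfolding variation_psums using psums_bdd[OF assms] psums_single[OF assms(3)]
  by (intro cSup_upper)

lemma var_nonneg:
  assumes "bdd_above (psums g 0 1)" "0 \<le> a" "a \<le> b" "b \<le> 1"
  shows "0 \<le> variation g a b"
  using var_ge_dist[OF assms] zero_le_dist order_trans by blast

lemma var_00:
  assumes "bdd_above (psums g 0 1)"
  shows "variation g 0 0 = 0"
  using var_add[OF assms, of 0 0 0] by simp

lemma two_pt:
  fixes a b t s :: real
  assumes "a = t \<or> a = s" "b = t \<or> b = s" "a \<le> b" "t < s"
  shows "dist (g b) (g a) = (if b = s then dist (g s) (g t) else 0) - (if a = s then dist (g s) (g t) else 0)"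
  using assms by (elim disjE) (auto simp: dist_commute)

lemma var_right_cont:
  assumes bdd: "bdd_above (psums g 0 1)" and cont: "continuous_on {0..1} g"
    and t: "0 \<le> t" "t < 1" and e: "e > 0"
  shows "\<exists>\<delta>>0. \<forall>s. t < s \<and> s < t + \<delta> \<and> s \<le> 1 \<longrightarrow> variation g 0 s - variation g 0 t < e"
proof -
  have bt1: "bdd_above (psums g t 1)" using psums_bdd[OF bdd] t by auto
  have "variation g t 1 - e/2 < Sup (psums g t 1)" using e by (simp add: variation_psums)
  then obtain S where S: "S \<in> psums g t 1" "variation g t 1 - e/2 < S"
    using less_cSupE[OF _ psums_ne] t by (metis less_eq_real_def)
  then obtain p k where P: "S = (\<Sum>i<k. dist (g (p (Suc i))) (g (p i)))" "p 0 = t" "p k = 1"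
      "\<forall>i<k. p i \<le> p (Suc i)" unfolding psums_def by blast
  define Q where "Q = {p i | i. i \<le> k \<and> t < p i}"
  have fQ: "finite Q" unfolding Q_def by (rule finite_subset[of _ "p ` {..k}"]) auto
  have neQ: "Q \<noteq> {}" unfolding Q_def using P t by auto
  define q where "q = Min Q"
  have qgt: "t < q" using Min_in[OF fQ neQ] unfolding q_def Q_def by auto
  have qle: "\<And>i. i \<le> k \<Longrightarrow> t < p i \<Longrightarrow> q \<le> p i" unfolding q_def
    by (rule Min_le[OF fQ]) (auto simp: Q_def)
  have pge: "\<And>i. i \<le> k \<Longrightarrow> t \<le> p i" using part_mono[OF P(4), of 0] P(2) by auto
  obtain d where d: "d > 0" "\<And>x'. x' \<in> {0..1} \<Longrightarrow> dist x' t < d \<Longrightarrow> dist (g x') (g t) < e/2"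
    using cont t e unfolding continuous_on_iff by (metis atLeastAtMost_iff half_gt_zero less_eq_real_def)
  show ?thesis
  proof (intro exI[of _ "min d (q - t)"] conjI allI impI)
    show "min d (q - t) > 0" using d qgt by simp
    fix s assume s: "t < s \<and> s < t + min d (q - t) \<and> s \<le> 1"
    define D where "D = dist (g s) (g t)"
    have D: "D < e/2" unfolding D_def using s t by (intro d(2)) (auto simp: dist_real_def)
    define \<phi> where "\<phi> u = (if u = s then D else 0)" for u
    have mn: "\<And>i. i \<le> k \<Longrightarrow> min (p i) s = t \<or> min (p i) s = s"
    proof -
      fix i assume i: "i \<le> k"
      show "min (p i) s = t \<or> min (p i) s = s"
      proof (cases "p i = t")
        case False
        then have "t < p i" using pge[OF i] by simp
        then have "q \<le> p i" using qle i by simp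
        then have "s < p i" using s by linarith
        then show ?thesis by (simp add: min_def)
      qed (use s in simp)
    qed
    have s1: "(\<Sum>i<k. dist (g (min (p (Suc i)) s)) (g (min (p i) s))) = D"
    proof -
      have "(\<Sum>i<k. dist (g (min (p (Suc i)) s)) (g (min (p i) s)))
          = (\<Sum>i<k. \<phi> (min (p (Suc i)) s) - \<phi> (min (p i) s))"
      proof (rule sum.cong)
        fix i assume "i \<in> {..<k}"
        then have i: "i < k" by simp
        have le: "min (p i) s \<le> min (p (Suc i)) s" using P(4) i by (simp add: min.coboundedI1)
        have m1: "min (p i) s = t \<or> min (p i) s = s" using mn i by simp
        have m2: "min (p (Suc i)) s = t \<or> min (p (Suc i)) s = s" using mn i by simp
        show "dist (g (min (p (Suc i)) s)) (g (min (p i) s)) = \<phi> (min (p (Suc i)) s) - \<phi> (min (p i) s)"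
          unfolding \<phi>_def D_def using s by (intro two_pt[OF m1 m2 le]) simp
      qed simp
      also have "\<dots> = \<phi> (min (p k) s) - \<phi> (min (p 0) s)" by (rule sum_lessThan_telescope)
      also have "\<dots> = D" using P s unfolding \<phi>_def by auto
      finally show ?thesis .
    qed
    define s2 where "s2 = (\<Sum>i<k. dist (g (max (p (Suc i)) s)) (g (max (p i) s)))"
    have "s2 \<in> psums g s 1" unfolding psums_def s2_def
      by (intro CollectI exI[of _ "\<lambda>i. max (p i) s"] exI[of _ k]) (use P s in auto)
    then have s2le: "s2 \<le> variation g s 1"
      unfolding variation_psums using psums_bdd[OF bdd, of s 1] s t by (intro cSup_upper) auto
    have "S \<le> D + s2" unfolding P s1[symmetric] s2_def sum.distrib[symmetric]
      by (rule sum_mono) (use P(4) in \<open>auto intro: dist_clamp\<close>)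
    have "variation g t 1 = variation g t s + variation g s 1" using var_add[OF bdd, of t s 1] s t by simp
    moreover have "variation g 0 s = variation g 0 t + variation g t s" using var_add[OF bdd, of 0 t s] s t by simp
    ultimately show "variation g 0 s - variation g 0 t < e"
      using S(2) \<open>S \<le> D + s2\<close> s2le D by linarith
  qed
qed


lemma arclen_mono:
  assumes bdd: "bdd_above (psums g 0 1)" and "x \<le> y"
  shows "arclen_fun g x \<le> arclen_fun g y"
proof -
  define u where "u = max 0 (min 1 x)"
  define w where "w = max 0 (min 1 y)"
  have uw: "0 \<le> u" "u \<le> w" "w \<le> 1" using assms(2) by (auto simp: u_def w_def)
  have "variation g 0 w = variation g 0 u + variation g u w" using var_add[OF bdd, of 0 u w] uw by simp
  moreover have "0 \<le> variation g u w" using var_nonneg[OF bdd, of u w] uw by simp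
  ultimately show ?thesis by (simp add: arclen_fun_def u_def[symmetric] w_def[symmetric])
qed

lemma arclen_rc:
  assumes bdd: "bdd_above (psums g 0 1)" and cont: "continuous_on {0..1} g"
  shows "continuous (at_right a) (arclen_fun g)"
proof (subst continuous_at_right_real_increasing)
  show "\<And>x y. x \<le> y \<Longrightarrow> arclen_fun g x \<le> arclen_fun g y" using arclen_mono[OF bdd] .
  show "\<forall>e>0. \<exists>\<delta>>0. arclen_fun g (a + \<delta>) - arclen_fun g a < e"
  proof (intro allI impI)
    fix e :: real assume e: "e > 0"
    consider "a < 0" | "1 \<le> a" | "0 \<le> a" "a < 1" by linarith
    then show "\<exists>\<delta>>0. arclen_fun g (a + \<delta>) - arclen_fun g a < e"
    proof cases
      case 1
      then show ?thesis using e by (intro exI[of _ "-a"]) (auto simp: arclen_fun_def max_def min_def)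
    next
      case 2
      then show ?thesis using e by (intro exI[of _ 1]) (auto simp: arclen_fun_def max_def min_def)
    next
      case 3
      obtain \<delta> where d: "\<delta> > 0" "\<forall>s. a < s \<and> s < a + \<delta> \<and> s \<le> 1 \<longrightarrow> variation g 0 s - variation g 0 a < e"
        using var_right_cont[OF bdd cont 3 e] by blast
      define h where "h = min (\<delta>/2) (1 - a)"
      have h: "h > 0" "a + h \<le> 1" "h < \<delta>" using d 3 by (auto simp: h_def)
      have "variation g 0 (a+h) - variation g 0 a < e" using d(2) h by auto
      moreover have "arclen_fun g (a+h) = variation g 0 (a+h)" "arclen_fun g a = variation g 0 a"
        using h 3 by (auto simp: arclen_fun_def)
      ultimately show ?thesis using h by (intro exI[of _ h]) auto
    qed
  qed
qed

lemma arclen_measure: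
  assumes bdd: "bdd_above (psums g 0 1)" and cont: "continuous_on {0..1} g"
  shows "emeasure (interval_measure (arclen_fun g)) {0..1} = ennreal (curve_length g)"
    and "measure (interval_measure (arclen_fun g)) {0..1} = curve_length g"
proof -
  let ?M = "interval_measure (arclen_fun g)"
  have mono: "\<And>x y. x \<le> y \<Longrightarrow> arclen_fun g x \<le> arclen_fun g y" using arclen_mono[OF bdd] .
  have rc: "\<And>a. continuous (at_right a) (arclen_fun g)" using arclen_rc[OF bdd cont] .
  have F1: "arclen_fun g 1 = curve_length g" by (simp add: arclen_fun_def curve_length_def)
  have F0: "arclen_fun g 0 = 0" "arclen_fun g (-1) = 0" using var_00[OF bdd] by (auto simp: arclen_fun_def)
  have a: "emeasure ?M {0<..1} = ennreal (curve_length g)"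
    using emeasure_interval_measure_Ioc[of 0 1 "arclen_fun g", OF _ mono rc] F1 F0 by simp
  have b: "emeasure ?M {-1<..1} = ennreal (curve_length g)"
    using emeasure_interval_measure_Ioc[of "-1" 1 "arclen_fun g", OF _ mono rc] F1 F0 by simp
  have "emeasure ?M {0<..1} \<le> emeasure ?M {0..1}" by (rule emeasure_mono) auto
  moreover have "emeasure ?M {0..1} \<le> emeasure ?M {-1<..1}" by (rule emeasure_mono) auto
  ultimately show e: "emeasure ?M {0..1} = ennreal (curve_length g)" using a b by simp
  have "0 \<le> curve_length g" unfolding curve_length_def using var_nonneg[OF bdd, of 0 1] by simp
  then show "measure ?M {0..1} = curve_length g" using e by (simp add: measure_def)
qed


lemma cont_set_integrable:
  assumes bdd: "bdd_above (psums g 0 1)" and cont: "continuous_on {0..1} g"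
    and h: "continuous_on {0..1::real} h" "\<And>t. t \<in> {0..1} \<Longrightarrow> \<bar>h t\<bar> \<le> B"
  shows "set_integrable (interval_measure (arclen_fun g)) {0..1} (h :: real \<Rightarrow> real)"
  unfolding set_integrable_def
proof (rule integrableI_bounded_set[where A="{0..1}" and B=B])
  show "{0..1::real} \<in> sets (interval_measure (arclen_fun g))" by simp
  have "(\<lambda>x. indicator {0..1} x *\<^sub>R h x) \<in> borel_measurable borel"
    by (rule borel_measurable_continuous_on_indicator) (use h in auto)
  then show "(\<lambda>x. indicator {0..1} x *\<^sub>R h x) \<in> borel_measurable (interval_measure (arclen_fun g))"
    by (subst measurable_cong_sets[OF sets_interval_measure refl])
  show "emeasure (interval_measure (arclen_fun g)) {0..1} < \<infinity>"
    using arclen_measure(1)[OF bdd cont] by simp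
  show "AE x in interval_measure (arclen_fun g). x \<in> {0..1} \<longrightarrow> norm (indicator {0..1} x *\<^sub>R h x) \<le> B"
    using h(2) by (intro AE_I2) auto
  show "AE x in interval_measure (arclen_fun g). x \<notin> {0..1} \<longrightarrow> indicator {0..1} x *\<^sub>R h x = 0"
    by (intro AE_I2) auto
qed

lemma int_bounds:
  assumes bdd: "bdd_above (psums g 0 1)" and cont: "continuous_on {0..1} g"
    and h: "continuous_on {0..1::real} h" "\<And>t. t \<in> {0..1} \<Longrightarrow> lo \<le> h t \<and> h t \<le> hi"
  shows "lo * curve_length g \<le> (LINT t:{0..1}|interval_measure (arclen_fun g). h t)"
    and "(LINT t:{0..1}|interval_measure (arclen_fun g). h t) \<le> hi * curve_length g"
proof -
  let ?M = "interval_measure (arclen_fun g)"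
  have hb: "\<And>t. t \<in> {0..1} \<Longrightarrow> \<bar>h t\<bar> \<le> max \<bar>lo\<bar> \<bar>hi\<bar>" using h(2) by fastforce
  have ih: "set_integrable ?M {0..1} h" by (rule cont_set_integrable[OF bdd cont h(1) hb])
  have ic: "set_integrable ?M {0..1} (\<lambda>_. c)" for c :: real
    by (rule cont_set_integrable[OF bdd cont _, of _ "\<bar>c\<bar>"]) auto
  have fin: "emeasure ?M {0..1} \<noteq> \<infinity>" using arclen_measure(1)[OF bdd cont] by simp
  have cst: "(LINT t:{0..1}|?M. c) = c * curve_length g" for c :: real
    using set_integral_const[of "{0..1}" ?M c] fin arclen_measure(2)[OF bdd cont] by simp
  show "lo * curve_length g \<le> (LINT t:{0..1}|?M. h t)"
    using set_integral_mono[OF ic ih, of lo] h(2) cst by simp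
  show "(LINT t:{0..1}|?M. h t) \<le> hi * curve_length g"
    using set_integral_mono[OF ih ic, of hi] h(2) cst by simp
qed


lemma half_bound:
  fixes M x \<alpha> :: real
  assumes "0 < M" "0 < \<alpha>" "\<alpha> < 1" "M/2 \<le> x"
  shows "x powr (\<alpha>-1) \<le> 2 * M powr (\<alpha>-1)"
proof -
  have "x powr (\<alpha>-1) \<le> (M/2) powr (\<alpha>-1)" using assms by (intro powr_mono2') auto
  also have "\<dots> = M powr (\<alpha>-1) * 2 powr (1-\<alpha>)"
  proof -
    have "(M/2) powr (\<alpha>-1) = M powr (\<alpha>-1) / 2 powr (\<alpha>-1)" using assms by (simp add: powr_divide)
    moreover have "2 powr (1-\<alpha>) = 1 / 2 powr (\<alpha>-1)"
      using powr_minus_divide[of 2 "\<alpha>-1"] by simp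
    ultimately show ?thesis by simp
  qed
  also have "2 powr (1-\<alpha>) \<le> 2 powr 1" using assms by (intro powr_mono) auto
  then have "M powr (\<alpha>-1) * 2 powr (1-\<alpha>) \<le> M powr (\<alpha>-1) * 2" by (intro mult_left_mono) auto
  finally show ?thesis by simp
qed

lemma part1:
  fixes L M C \<alpha> :: real
  assumes "0 < L" "0 < M" "0 < \<alpha>" "\<alpha> < 1" "1 \<le> C"
    and "M powr (\<alpha>-1) * L \<le> C * L powr \<alpha>"
  shows "L \<le> C powr (1/(1-\<alpha>)) * M"
proof -
  define \<beta> where "\<beta> = 1 - \<alpha>"
  have b: "0 < \<beta>" using assms by (simp add: \<beta>_def)
  have L: "L = L powr \<alpha> * L powr \<beta>" using assms by (simp add: \<beta>_def powr_add[symmetric])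
  have Mb: "M powr (\<alpha>-1) = 1 / M powr \<beta>" using assms by (simp add: \<beta>_def powr_minus_divide[symmetric])
  have "L powr \<alpha> * (L powr \<beta> / M powr \<beta>) \<le> L powr \<alpha> * C"
    using assms(6) unfolding Mb by (subst (asm) L) (simp add: algebra_simps)
  then have "L powr \<beta> / M powr \<beta> \<le> C" using assms by (smt (verit) mult_le_cancel_left_pos powr_gt_zero times_divide_eq_right)
  then have 1: "L powr \<beta> \<le> C * M powr \<beta>" using assms by (simp add: divide_le_eq)
  have "L = (L powr \<beta>) powr (1/\<beta>)" using b assms by (simp add: powr_powr)
  also have "\<dots> \<le> (C * M powr \<beta>) powr (1/\<beta>)" using 1 b by (intro powr_mono2) auto
  also have "\<dots> = C powr (1/\<beta>) * M" using b assms by (simp add: powr_mult powr_powr)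
  finally show ?thesis by (simp add: \<beta>_def)
qed

lemma path_dist_le:
  assumes bdd: "bdd_above (psums g 0 1)" and u: "u \<in> {0..1}" and v: "v \<in> {0..1}"
  shows "dist (g u) (g v) \<le> curve_length g"
proof -
  have *: "dist (g b) (g a) \<le> curve_length g" if "0 \<le> a" "a \<le> b" "b \<le> 1" for a b
  proof -
    have "dist (g b) (g a) \<le> variation g a b" using var_ge_dist[OF bdd that] .
    moreover have "variation g 0 1 = variation g 0 a + variation g a 1" using var_add[OF bdd, of 0 a 1] that by simp
    moreover have "variation g a 1 = variation g a b + variation g b 1" using var_add[OF bdd, of a b 1] that by simp
    moreover have "0 \<le> variation g 0 a" using var_nonneg[OF bdd, of 0 a] that by simp
    moreover have "0 \<le> variation g b 1" using var_nonneg[OF bdd, of b 1] that by simp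
    ultimately show ?thesis unfolding curve_length_def by linarith
  qed
  show ?thesis
  proof (cases "u \<le> v")
    case True then show ?thesis using *[of u v] u v by (simp add: dist_commute)
  next
    case False then show ?thesis using *[of v u] u v by simp
  qed
qed

theorem lemma2p2:
  fixes \<Omega> :: "'a::euclidean_space set" and x y :: 'a
    and \<gamma> :: "real \<Rightarrow> 'a" and \<alpha> C :: real
  assumes "open \<Omega>" and "connected \<Omega>" and "\<Omega> \<noteq> UNIV"
    and "x \<in> \<Omega>" and "y \<in> \<Omega>"
    and "path \<gamma>" and "rectifiable \<gamma>" and "path_image \<gamma> \<subseteq> \<Omega>"
    and "pathstart \<gamma> = x" and "pathfinish \<gamma> = y"
    and "0 < \<alpha>" and "\<alpha> < 1" and "1 \<le> C"
    and "arclength_integral \<gamma> (\<lambda>z. infdist z (frontier \<Omega>) powr (\<alpha> - 1))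
           \<le> C * curve_length \<gamma> powr \<alpha>"
  shows "(\<exists>zb\<in>path_image \<gamma>.
            curve_length \<gamma> \<le> C powr (1 / (1 - \<alpha>)) * infdist zb (frontier \<Omega>))
       \<and> arclength_integral \<gamma> (\<lambda>z. infdist z (frontier \<Omega>) powr (\<alpha> - 1)) / curve_length \<gamma>
           \<le> 2 * C * (INF z\<in>path_image \<gamma>. infdist z (frontier \<Omega>) powr (\<alpha> - 1))"
proof -
  note assms' = assms
  let ?fr = "frontier \<Omega>"
  let ?K = "path_image \<gamma>"
  define d where "d z = infdist z ?fr" for z
  define L where "L = curve_length \<gamma>"
  define I where "I = arclength_integral \<gamma> (\<lambda>z. infdist z (frontier \<Omega>) powr (\<alpha> - 1))"
  have bdd: "bdd_above (psums \<gamma> 0 1)" using assms(7) by (simp add: rectifiable_psums)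
  have cg: "continuous_on {0..1} \<gamma>" using assms(6) by (simp add: path_def)
  have frne: "?fr \<noteq> {}" using frontier_not_empty[of \<Omega>] assms(3,4) by auto
  have frcl: "closed ?fr" by simp
  have dpos: "\<And>z. z \<in> ?K \<Longrightarrow> 0 < d z"
  proof -
    fix z assume "z \<in> ?K"
    then have "z \<in> \<Omega>" using assms(8) by auto
    then have "z \<notin> ?fr" using assms(1) by (simp add: frontier_def interior_open)
    then show "0 < d z" unfolding d_def by (rule infdist_pos_not_in_closed[OF frcl frne])
  qed
  have Kc: "compact ?K" using assms(6) by (rule compact_path_image)
  have Kne: "?K \<noteq> {}" by (simp add: path_image_def)
  have dc: "continuous_on ?K d" unfolding d_def by (intro continuous_on_infdist continuous_on_id)
  obtain zb where zb: "zb \<in> ?K" "\<And>z. z \<in> ?K \<Longrightarrow> d z \<le> d zb"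
    using continuous_attains_sup[OF Kc Kne dc] by blast
  obtain zm where zm: "zm \<in> ?K" "\<And>z. z \<in> ?K \<Longrightarrow> d zm \<le> d z"
    using continuous_attains_inf[OF Kc Kne dc] by blast
  define M where "M = d zb"
  define m where "m = d zm"
  have Mpos: "0 < M" "0 < m" using dpos zb zm by (auto simp: M_def m_def)
  have gK: "\<And>t. t \<in> {0..1} \<Longrightarrow> \<gamma> t \<in> ?K" by (auto simp: path_image_def)
  have hc: "continuous_on {0..1} (\<lambda>t. d (\<gamma> t) powr (\<alpha> - 1))"
    unfolding d_def
    by (intro continuous_on_powr continuous_on_infdist cg continuous_on_const)
       (use dpos gK in \<open>force simp: d_def\<close>)
  have hb: "\<And>t. t \<in> {0..1} \<Longrightarrow> M powr (\<alpha> - 1) \<le> d (\<gamma> t) powr (\<alpha> - 1) \<and> d (\<gamma> t) powr (\<alpha> - 1) \<le> m powr (\<alpha> - 1)"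
  proof -
    fix t :: real assume t: "t \<in> {0..1}"
    have "0 < d (\<gamma> t)" "d (\<gamma> t) \<le> M" "m \<le> d (\<gamma> t)" using dpos gK[OF t] zb zm gK[OF t]
      by (auto simp: M_def m_def)
    then show "M powr (\<alpha> - 1) \<le> d (\<gamma> t) powr (\<alpha> - 1) \<and> d (\<gamma> t) powr (\<alpha> - 1) \<le> m powr (\<alpha> - 1)"
      using assms(12) Mpos by (auto intro!: powr_mono2')
  qed
  have Ieq: "I = (LINT t:{0..1}|interval_measure (arclen_fun \<gamma>). d (\<gamma> t) powr (\<alpha> - 1))"
    by (simp add: I_def arclength_integral_def d_def)
  have Ilo: "M powr (\<alpha> - 1) * L \<le> I" and Ihi: "I \<le> m powr (\<alpha> - 1) * L"
    using int_bounds[OF bdd cg hc hb] unfolding Ieq L_def by auto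
  have hyp: "I \<le> C * L powr \<alpha>" using assms(14) unfolding I_def L_def .
  have L0: "0 \<le> L" unfolding L_def curve_length_def using var_nonneg[OF bdd, of 0 1] by simp
  have part_i: "\<exists>zb\<in>?K. L \<le> C powr (1 / (1 - \<alpha>)) * infdist zb ?fr"
  proof (cases "L = 0")
    case True
    then show ?thesis using zb(1) by (intro bexI[of _ zb]) (auto intro!: mult_nonneg_nonneg infdist_nonneg)
  next
    case False
    then have "L \<le> C powr (1 / (1 - \<alpha>)) * M"
      using part1[of L M \<alpha> C] L0 Mpos assms(11-13) Ilo hyp by linarith
    then show ?thesis using zb(1) by (auto simp: M_def d_def)
  qed
  have INFge: "M powr (\<alpha> - 1) \<le> (INF z\<in>?K. infdist z ?fr powr (\<alpha> - 1))"
  proof (rule cINF_greatest[OF Kne])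
    fix z assume z: "z \<in> ?K"
    show "M powr (\<alpha> - 1) \<le> infdist z ?fr powr (\<alpha> - 1)"
      using dpos[OF z] zb(2)[OF z] assms(12) by (auto simp: M_def d_def intro!: powr_mono2')
  qed
  have part_ii: "I / L \<le> 2 * C * M powr (\<alpha> - 1)"
  proof (cases "L = 0")
    case True
    then show ?thesis using assms(13) by simp
  next
    case False
    then have Lp: "0 < L" using L0 by simp
    show ?thesis
    proof (cases "L \<le> M / 2")
      case True
      obtain u where u: "u \<in> {0..1}" "\<gamma> u = zb" using zb(1) by (auto simp: path_image_def)
      obtain v where v: "v \<in> {0..1}" "\<gamma> v = zm" using zm(1) by (auto simp: path_image_def)
      have "dist zb zm \<le> L" using path_dist_le[OF bdd u(1) v(1)] u v by (simp add: L_def)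
      moreover have "M \<le> m + dist zb zm" unfolding M_def m_def d_def by (rule infdist_triangle)
      ultimately have "M/2 \<le> m" using True by linarith
      then have "m powr (\<alpha> - 1) \<le> 2 * M powr (\<alpha> - 1)" using half_bound[of M \<alpha> m] Mpos assms(11,12) by simp
      moreover have "I / L \<le> m powr (\<alpha> - 1)" using Ihi Lp by (simp add: divide_le_eq)
      moreover have "2 * M powr (\<alpha> - 1) \<le> 2 * C * M powr (\<alpha> - 1)" using assms(13) mult_right_mono[of 1 C "M powr (\<alpha> - 1)"] by simp
      ultimately show ?thesis by linarith
    next
      case False
      have "I / L \<le> C * L powr \<alpha> / L" using hyp Lp by (simp add: divide_right_mono)
      also have "C * L powr \<alpha> / L = C * L powr (\<alpha> - 1)" using Lp by (simp add: powr_diff)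
      also have "L powr (\<alpha> - 1) \<le> 2 * M powr (\<alpha> - 1)" using half_bound[of M \<alpha> L] Mpos assms(11,12) False by simp
      then have "C * L powr (\<alpha> - 1) \<le> C * (2 * M powr (\<alpha> - 1))" using assms(13) by simp
      finally show ?thesis by simp
    qed
  qed
  have "I / L \<le> 2 * C * (INF z\<in>?K. infdist z ?fr powr (\<alpha> - 1))"
    using part_ii INFge assms(13) by (smt (verit) mult_left_mono)
  then show ?thesis using part_i unfolding I_def L_def by blast
qed

end
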